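(* Let $n\ge1$ and let $\varphi:\mathbb{C}[x_1,\dots,x_9]\to\mathbb{C}[a_1,a_2,b_1,b_2]$ be the $\mathbb{C}$-algebra homomorphism defined as follows. Put $u_1=a_1^{n+1},\ v_1=a_1a_2,\ w_1=a_2^{n+1},\ u_2=b_1^{n+1},\ v_2=b_1b_2,\ w_2=b_2^{n+1}$ and $x_1\mapsto u_1+u_2,\ x_2\mapsto v_1+v_2,\ x_3\mapsto w_1+w_2,\ x_4\mapsto (u_1-u_2)^2,\ x_5\mapsto (v_1-v_2)^2,\ x_6\mapsto (w_1-w_2)^2,\ x_7\mapsto (u_1-u_2)(v_1-v_2),\ x_8\mapsto (u_1-u_2)(w_1-w_2),\ x_9\mapsto (v_1-v_2)(w_1-w_2)$. Then $\ker\varphi$ is generated by the ten elements $f_1=\sum_{i=0}^{\lfloor (n+1)/2\rfloor}\binom{n+1}{2i}x_2^{n-2i+1}x_5^i-2^{n-1}(x_1x_3+x_8)$, $f_2=\sum_{i=0}^{\lfloor (n+1)/2\rfloor}\binom{n+1}{2i+1}x_2^{n-2i}x_5^{i+1}-2^{n-1}(x_1x_9+x_3x_7)$, $f_3=x_5x_8-x_7x_9$, $f_4=x_5x_6-x_9^2$, $f_5=x_4x_5-x_7^2$, $f_6=\sum_{i=0}^{\lfloor (n+1)/2\rfloor}\binom{n+1}{2i+1}x_2^{n-2i}x_5^{i}x_9-2^{n-1}(x_1x_6+x_3x_8)$, $f_7=\sum_{i=0}^{\lfloor (n+1)/2\rfloor}\binom{n+1}{2i+1}x_2^{n-2i}x_5^{i}x_7-2^{n-1}(x_3x_4+x_1x_8)$,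 $f_8=x_7x_8-x_4x_9$, $f_9=x_6x_7-x_8x_9$, $f_{10}=x_4x_6-x_8^2$ (binomial coefficients $\binom{m}{k}$ with $k>m$ are zero). Equivalently, these give a presentation of the invariant ring defining $\mathrm{Sym}^2(\Gamma)$ for $\Gamma$ of type $\mathbf{A}_n$.
   Context: The image of $\varphi$ is the ring of invariants of $\mathbb{C}[a_1,a_2,b_1,b_2]$ under the wreath product $C_{n+1}\wr\mathfrak{S}_2$, where the cyclic group $C_{n+1}$ acts on $(a_1,a_2)$ and on $(b_1,b_2)$ by $\mathrm{diag}(\zeta,\zeta^{-1})$, $\zeta$ a primitive $(n+1)$-th root of unity, and $\mathfrak{S}_2$ swaps $a_i\leftrightarrow b_i$; its spectrum is $\mathrm{Sym}^2(\Gamma)$ for $\Gamma=\{x^{n+1}=yz\}$. *)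

theory Defs
  imports Complex_Main "HOL-Library.Poly_Mapping"
begin

text \<open>Multivariate polynomials with complex coefficients in the variables of type 'v,
  represented as finitely supported maps from monomials (exponent vectors) to coefficients.\<close>
type_synonym 'v mpoly = "('v \<Rightarrow>\<^sub>0 nat) \<Rightarrow>\<^sub>0 complex"

datatype xvar = X1 | X2 | X3 | X4 | X5 | X6 | X7 | X8 | X9
datatype tvar = A1 | A2 | B1 | B2

definition Var :: "'v \<Rightarrow> 'v mpoly" where
  "Var v = Poly_Mapping.single (Poly_Mapping.single v 1) 1"

definition Const :: "complex \<Rightarrow> 'v mpoly" where
  "Const c = Poly_Mapping.single 0 c"

definition subst_hom :: "('v \<Rightarrow> 'w mpoly) \<Rightarrow> 'v mpoly \<Rightarrow> 'w mpoly" where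
  "subst_hom g p = (\<Sum>mon\<in>Poly_Mapping.keys p. Const (Poly_Mapping.lookup p mon) * (\<Prod>v\<in>Poly_Mapping.keys (mon::'v \<Rightarrow>\<^sub>0 nat). g v ^ Poly_Mapping.lookup mon v))"

definition ideal_gen :: "'a::comm_ring_1 set \<Rightarrow> 'a set" where
  "ideal_gen S = {\<Sum>s\<in>G. c s * s | G c. finite G \<and> G \<subseteq> S}"

definition phi_img :: "nat \<Rightarrow> xvar \<Rightarrow> tvar mpoly" where
  "phi_img n x = (let
     u1 = Var A1 ^ (n+1); v1 = Var A1 * Var A2; w1 = Var A2 ^ (n+1);
     u2 = Var B1 ^ (n+1); v2 = Var B1 * Var B2; w2 = Var B2 ^ (n+1)
   in case x of
     X1 \<Rightarrow> u1 + u2 | X2 \<Rightarrow> v1 + v2 | X3 \<Rightarrow> w1 + w2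
   | X4 \<Rightarrow> (u1 - u2)^2 | X5 \<Rightarrow> (v1 - v2)^2 | X6 \<Rightarrow> (w1 - w2)^2
   | X7 \<Rightarrow> (u1 - u2) * (v1 - v2) | X8 \<Rightarrow> (u1 - u2) * (w1 - w2)
   | X9 \<Rightarrow> (v1 - v2) * (w1 - w2))"

definition phi :: "nat \<Rightarrow> xvar mpoly \<Rightarrow> tvar mpoly" where
  "phi n = subst_hom (phi_img n)"

definition gens :: "nat \<Rightarrow> xvar mpoly set" where
  "gens n = (let
     x1 = Var X1; x2 = Var X2; x3 = Var X3; x4 = Var X4; x5 = Var X5;
     x6 = Var X6; x7 = Var X7; x8 = Var X8; x9 = Var X9;
     N = (n+1) div 2;
     c = (2::xvar mpoly) ^ (n-1);
     f1 = (\<Sum>i=0..N. of_nat ((n+1) choose (2*i)) * x2 ^ (n + 1 - 2*i) * x5 ^ i)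
            - c * (x1*x3 + x8);
     f2 = (\<Sum>i=0..N. of_nat ((n+1) choose (2*i+1)) * x2 ^ (n - 2*i) * x5 ^ (i+1))
            - c * (x1*x9 + x3*x7);
     f3 = x5*x8 - x7*x9; f4 = x5*x6 - x9^2; f5 = x4*x5 - x7^2;
     f6 = (\<Sum>i=0..N. of_nat ((n+1) choose (2*i+1)) * x2 ^ (n - 2*i) * x5 ^ i * x9)
            - c * (x1*x6 + x3*x8);
     f7 = (\<Sum>i=0..N. of_nat ((n+1) choose (2*i+1)) * x2 ^ (n - 2*i) * x5 ^ i * x7)
            - c * (x3*x4 + x1*x8);
     f8 = x7*x8 - x4*x9; f9 = x6*x7 - x8*x9; f10 = x4*x6 - x8^2
   in {f1, f2, f3, f4, f5, f6, f7, f8, f9, f10})"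

end

theory Submission
  imports Defs
begin


definition mon :: "('v \<Rightarrow>\<^sub>0 nat) \<Rightarrow> 'v mpoly" where
  "mon m = Poly_Mapping.single m 1"

lemma Const_add: "Const (a + b) = (Const a + Const b :: 'v mpoly)"
  by (simp add: Const_def single_add)
lemma Const_mult: "Const (a * b) = (Const a * Const b :: 'v mpoly)"
  by (simp add: Const_def mult_single)
lemma Const_0[simp]: "Const 0 = 0" by (simp add: Const_def)
lemma Const_1[simp]: "Const 1 = 1" by (simp add: Const_def)
lemma Const_uminus: "Const (- a) = (- Const a :: 'v mpoly)"
  by (simp add: Const_def single_uminus)
lemma Const_diff: "Const (a - b) = (Const a - Const b :: 'v mpoly)"
  by (simp add: Const_def single_diff)
lemma Const_of_nat: "Const (of_nat k) = (of_nat k :: 'v mpoly)"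
  by (simp add: Const_def)
lemma Const_numeral: "Const (numeral k) = (numeral k :: 'v mpoly)"
  by (simp add: Const_def)
lemma Const_power: "Const (a ^ k) = (Const a ^ k :: 'v mpoly)"
  by (induct k) (simp_all add: Const_mult)

lemma Const_sum: "Const (sum f A) = (\<Sum>a\<in>A. Const (f a) :: 'v mpoly)"
  by (induct A rule: infinite_finite_induct) (simp_all add: Const_add)

lemma Const_mon: "Const c * mon m = Poly_Mapping.single m c"
  by (simp add: Const_def mon_def mult_single)

lemma mon_add: "mon (a + b) = mon a * mon b"
  by (simp add: mon_def mult_single)
lemma mon_0[simp]: "mon 0 = 1" by (simp add: mon_def)

lemma poly_repr: "p = (\<Sum>m\<in>Poly_Mapping.keys p. Poly_Mapping.single m (Poly_Mapping.lookup p m))"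
proof (rule poly_mapping_eqI)
  fix k
  have "(\<Sum>m\<in>Poly_Mapping.keys p. Poly_Mapping.lookup (Poly_Mapping.single m (Poly_Mapping.lookup p m)) k)
     = (\<Sum>m\<in>Poly_Mapping.keys p. if m = k then Poly_Mapping.lookup p m else 0)"
    by (rule sum.cong) (auto simp: lookup_single when_def)
  also have "\<dots> = Poly_Mapping.lookup p k"
    by (simp add: sum.delta in_keys_iff)
  finally show "Poly_Mapping.lookup p k = Poly_Mapping.lookup (\<Sum>m\<in>Poly_Mapping.keys p. Poly_Mapping.single m (Poly_Mapping.lookup p m)) k"
    by (simp add: lookup_sum)
qed

lemma mon_inj: "mon a = mon b \<longleftrightarrow> a = b"
  by (metis mon_def inj_single inj_eq lookup_single_eq lookup_single_not_eq zero_neq_one)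

definition Ev :: "('v \<Rightarrow> 'w mpoly) \<Rightarrow> ('v \<Rightarrow>\<^sub>0 nat) \<Rightarrow> 'w mpoly" where
  "Ev g m = (\<Prod>v\<in>Poly_Mapping.keys m. g v ^ Poly_Mapping.lookup m v)"

lemma Ev_superset:
  assumes "finite S" "Poly_Mapping.keys m \<subseteq> S"
  shows "Ev g m = (\<Prod>v\<in>S. g v ^ Poly_Mapping.lookup m v)"
  unfolding Ev_def
  by (rule prod.mono_neutral_left) (use assms in \<open>auto simp: in_keys_iff\<close>)

lemma Ev_add: "Ev g (a + b) = Ev g a * Ev g b"
proof -
  let ?S = "Poly_Mapping.keys a \<union> Poly_Mapping.keys b"
  have "Ev g (a + b) = (\<Prod>v\<in>?S. g v ^ Poly_Mapping.lookup (a+b) v)"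
    by (rule Ev_superset) (auto simp: keys_add)
  also have "\<dots> = (\<Prod>v\<in>?S. g v ^ Poly_Mapping.lookup a v) * (\<Prod>v\<in>?S. g v ^ Poly_Mapping.lookup b v)"
    by (simp add: lookup_add power_add prod.distrib)
  also have "\<dots> = Ev g a * Ev g b"
    by (simp add: Ev_superset[of ?S])
  finally show ?thesis .
qed

lemma Ev_0[simp]: "Ev g 0 = 1" by (simp add: Ev_def)

lemma Ev_single: "Ev g (Poly_Mapping.single v k) = g v ^ k"
  by (cases "k = 0") (simp_all add: Ev_def)

lemma subst_superset:
  assumes "finite K" "Poly_Mapping.keys p \<subseteq> K"
  shows "subst_hom g p = (\<Sum>m\<in>K. Const (Poly_Mapping.lookup p m) * Ev g m)"
  unfolding subst_hom_def Ev_def[symmetric]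
  by (rule sum.mono_neutral_left) (use assms in \<open>auto simp: in_keys_iff\<close>)

lemma subst_add: "subst_hom g (p + q) = subst_hom g p + subst_hom g q"
proof -
  let ?K = "Poly_Mapping.keys p \<union> Poly_Mapping.keys q"
  have "subst_hom g (p + q) = (\<Sum>m\<in>?K. Const (Poly_Mapping.lookup (p+q) m) * Ev g m)"
    by (rule subst_superset) (auto simp: keys_add)
  also have "\<dots> = (\<Sum>m\<in>?K. Const (Poly_Mapping.lookup p m) * Ev g m) + (\<Sum>m\<in>?K. Const (Poly_Mapping.lookup q m) * Ev g m)"
    by (simp add: lookup_add Const_add distrib_right sum.distrib)
  also have "\<dots> = subst_hom g p + subst_hom g q"
    by (simp add: subst_superset[of ?K])
  finally show ?thesis .
qed

lemma subst_0[simp]: "subst_hom g 0 = 0" by (simp add: subst_hom_def)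

lemma subst_single: "subst_hom g (Poly_Mapping.single m c) = Const c * Ev g m"
  by (subst subst_superset[of "{m}"]) auto

lemma subst_sum: "subst_hom g (sum f A) = (\<Sum>a\<in>A. subst_hom g (f a))"
  by (induct A rule: infinite_finite_induct) (simp_all add: subst_add)

lemma subst_repr: "subst_hom g p = (\<Sum>m\<in>Poly_Mapping.keys p. Const (Poly_Mapping.lookup p m) * Ev g m)"
  by (simp add: subst_hom_def Ev_def)

lemma subst_mult: "subst_hom g (p * q) = subst_hom g p * subst_hom g q"
proof -
  let ?P = "Poly_Mapping.keys p" and ?Q = "Poly_Mapping.keys q"
  let ?cp = "Poly_Mapping.lookup p" and ?cq = "Poly_Mapping.lookup q"
  have "p * q = (\<Sum>a\<in>?P. Poly_Mapping.single a (?cp a)) * (\<Sum>b\<in>?Q. Poly_Mapping.single b (?cq b))"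
    by (metis poly_repr)
  also have "\<dots> = (\<Sum>a\<in>?P. \<Sum>b\<in>?Q. Poly_Mapping.single (a+b) (?cp a * ?cq b))"
    by (simp add: sum_product mult_single)
  finally have "subst_hom g (p * q) = (\<Sum>a\<in>?P. \<Sum>b\<in>?Q. Const (?cp a * ?cq b) * Ev g (a + b))"
    by (simp add: subst_sum subst_single)
  also have "\<dots> = (\<Sum>a\<in>?P. \<Sum>b\<in>?Q. (Const (?cp a) * Ev g a) * (Const (?cq b) * Ev g b))"
    by (simp add: Const_mult Ev_add mult_ac)
  also have "\<dots> = subst_hom g p * subst_hom g q"
    by (simp add: subst_repr sum_product)
  finally show ?thesis .
qed

lemma subst_Const[simp]: "subst_hom g (Const c) = Const c"
  unfolding Const_def by (simp add: subst_single Const_def)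

lemma subst_1[simp]: "subst_hom g 1 = 1"
  using subst_Const[of g 1] by simp

lemma subst_Var[simp]: "subst_hom g (Var v) = g v"
  unfolding Var_def by (simp add: subst_single Ev_single)

lemma subst_uminus: "subst_hom g (- p) = - subst_hom g p"
  using subst_add[of g p "-p"] by (simp add: add_eq_0_iff2)

lemma subst_diff: "subst_hom g (p - q) = subst_hom g p - subst_hom g q"
  using subst_add[of g p "-q"] by (simp add: subst_uminus)

lemma subst_power: "subst_hom g (p ^ k) = subst_hom g p ^ k"
  by (induct k) (simp_all add: subst_mult)

lemma subst_prod: "subst_hom g (prod f A) = (\<Prod>a\<in>A. subst_hom g (f a))"
  by (induct A rule: infinite_finite_induct) (simp_all add: subst_mult)

lemma subst_of_nat[simp]: "subst_hom g (of_nat k) = of_nat k"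
  by (induct k) (simp_all add: subst_add)

lemma subst_numeral[simp]: "subst_hom g (numeral k) = numeral k"
  by (metis of_nat_numeral subst_of_nat)

lemmas subst_simps = subst_add subst_mult subst_diff subst_uminus subst_power subst_sum subst_prod

lemma mon_single: "mon (Poly_Mapping.single v k) = Var v ^ k"
proof (induct k)
  case 0 then show ?case by simp
next
  case (Suc k)
  have "Poly_Mapping.single v (Suc k) = Poly_Mapping.single v 1 + Poly_Mapping.single v k"
    by (simp add: single_add[symmetric])
  then show ?case using Suc by (simp only: mon_add) (simp add: Var_def mon_def)
qed

lemma mon_sum: "mon (sum f A) = (\<Prod>a\<in>A. mon (f a))"
  by (induct A rule: infinite_finite_induct) (simp_all add: mon_add)

lemma mon_Ev: "mon m = Ev Var m"
proof -
  have "mon m = mon (\<Sum>v\<in>Poly_Mapping.keys m. Poly_Mapping.single v (Poly_Mapping.lookup m v))"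
    by (metis poly_repr)
  also have "\<dots> = Ev Var m" by (simp add: mon_sum mon_single Ev_def)
  finally show ?thesis .
qed

lemma subst_Var_id: "subst_hom Var p = p"
proof -
  have "subst_hom Var p = (\<Sum>m\<in>Poly_Mapping.keys p. Poly_Mapping.single m (Poly_Mapping.lookup p m))"
    by (simp add: subst_repr mon_Ev[symmetric] Const_mon)
  then show ?thesis by (metis poly_repr)
qed

lemma subst_mon: "subst_hom g (mon m) = Ev g m"
  by (simp add: mon_def subst_single)

lemma subst_Ev: "subst_hom h (Ev g m) = Ev (\<lambda>v. subst_hom h (g v)) m"
  by (simp add: Ev_def subst_prod subst_power)

lemma subst_comp: "subst_hom h (subst_hom g p) = subst_hom (\<lambda>v. subst_hom h (g v)) p"
  by (simp add: subst_repr[of g] subst_repr[of "\<lambda>v. subst_hom h (g v)"] subst_sum subst_mult subst_Ev)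

section \<open>Ideals\<close>

lemma ideal_gen_0[simp]: "0 \<in> ideal_gen S"
  unfolding ideal_gen_def by (rule CollectI, rule exI[of _ "{}"]) auto

lemma ideal_gen_base: "s \<in> S \<Longrightarrow> s \<in> ideal_gen S"
  unfolding ideal_gen_def by (rule CollectI, rule exI[of _ "{s}"], rule exI[of _ "\<lambda>_. 1"]) auto

lemma ideal_gen_mult: "x \<in> ideal_gen S \<Longrightarrow> r * x \<in> ideal_gen S"
proof -
  assume "x \<in> ideal_gen S"
  then obtain G c where x: "x = (\<Sum>s\<in>G. c s * s)" "finite G" "G \<subseteq> S"
    unfolding ideal_gen_def by blast
  have "r * x = (\<Sum>s\<in>G. (\<lambda>s. r * c s) s * s)" by (simp add: x sum_distrib_left mult.assoc)
  then show ?thesis unfolding ideal_gen_def using x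
    by (intro CollectI exI[of _ G] exI[of _ "\<lambda>s. r * c s"]) simp
qed

lemma ideal_gen_add: "x \<in> ideal_gen S \<Longrightarrow> y \<in> ideal_gen S \<Longrightarrow> x + y \<in> ideal_gen S"
proof -
  assume "x \<in> ideal_gen S" "y \<in> ideal_gen S"
  then obtain G c H d where x: "x = (\<Sum>s\<in>G. c s * s)" "finite G" "G \<subseteq> S"
     and y: "y = (\<Sum>s\<in>H. d s * s)" "finite H" "H \<subseteq> S"
    unfolding ideal_gen_def by blast
  define e where "e s = (if s \<in> G then c s else 0) + (if s \<in> H then d s else 0)" for s
  have 1: "(\<Sum>s\<in>G\<union>H. (if s \<in> G then c s else 0) * s) = x"
  proof -
    have "(\<Sum>s\<in>G\<union>H. (if s \<in> G then c s else 0) * s) = (\<Sum>s\<in>G\<union>H. if s \<in> G then c s * s else 0)"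
      by (rule sum.cong) auto
    also have "\<dots> = (\<Sum>s\<in>{s\<in>G\<union>H. s \<in> G}. c s * s)"
      using x y by (simp only: sum.inter_filter finite_Un)
    also have "{s\<in>G\<union>H. s \<in> G} = G" by auto
    finally show ?thesis using x by simp
  qed
  have 2: "(\<Sum>s\<in>G\<union>H. (if s \<in> H then d s else 0) * s) = y"
  proof -
    have "(\<Sum>s\<in>G\<union>H. (if s \<in> H then d s else 0) * s) = (\<Sum>s\<in>G\<union>H. if s \<in> H then d s * s else 0)"
      by (rule sum.cong) auto
    also have "\<dots> = (\<Sum>s\<in>{s\<in>G\<union>H. s \<in> H}. d s * s)"
      using x y by (simp only: sum.inter_filter finite_Un)
    also have "{s\<in>G\<union>H. s \<in> H} = H" by auto
    finally show ?thesis using y by simp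
  qed
  have "x + y = (\<Sum>s\<in>G\<union>H. e s * s)"
    unfolding e_def distrib_right sum.distrib 1 2 ..
  then show ?thesis unfolding ideal_gen_def using x y by blast
qed

lemma ideal_gen_uminus: "x \<in> ideal_gen S \<Longrightarrow> - x \<in> ideal_gen S"
  using ideal_gen_mult[of x S "-1"] by simp

lemma ideal_gen_diff: "x \<in> ideal_gen S \<Longrightarrow> y \<in> ideal_gen S \<Longrightarrow> x - y \<in> ideal_gen S"
  using ideal_gen_add[of x S "-y"] ideal_gen_uminus by fastforce

lemma ideal_gen_mult2: "x \<in> ideal_gen S \<Longrightarrow> x * r \<in> ideal_gen S"
  using ideal_gen_mult[of x S r] by (simp add: mult.commute)

lemma ideal_gen_sum: "(\<And>a. a \<in> A \<Longrightarrow> f a \<in> ideal_gen S) \<Longrightarrow> sum f A \<in> ideal_gen S"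
  by (induct A rule: infinite_finite_induct) (auto intro: ideal_gen_add)

lemma ideal_gen_least:
  assumes "S \<subseteq> ideal_gen T"
  shows "ideal_gen S \<subseteq> ideal_gen T"
proof
  fix x assume "x \<in> ideal_gen S"
  then obtain G c where x: "x = (\<Sum>s\<in>G. c s * s)" "finite G" "G \<subseteq> S"
    unfolding ideal_gen_def by blast
  show "x \<in> ideal_gen T" unfolding x(1)
    by (rule ideal_gen_sum, rule ideal_gen_mult) (use x assms in auto)
qed

lemma ideal_gen_pair: "x \<in> ideal_gen {a, b} \<Longrightarrow> \<exists>A B. x = A * a + B * b"
proof -
  assume "x \<in> ideal_gen {a, b}"
  then obtain G c where x: "x = (\<Sum>s\<in>G. c s * s)" "finite G" "G \<subseteq> {a,b}"
    unfolding ideal_gen_def by blast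
  have "\<And>G. finite G \<Longrightarrow> G \<subseteq> {a,b} \<Longrightarrow> \<exists>A B. (\<Sum>s\<in>G. c s * s) = A * a + B * b"
  proof -
    fix G :: "'a set" assume "finite G" "G \<subseteq> {a,b}"
    then show "\<exists>A B. (\<Sum>s\<in>G. c s * s) = A * a + B * b"
    proof (induct G rule: finite_induct)
      case empty then show ?case by (intro exI[of _ 0]) simp
    next
      case (insert y F)
      then obtain A B where AB: "(\<Sum>s\<in>F. c s * s) = A * a + B * b" by auto
      have "y = a \<or> y = b" using insert by auto
      then show ?case
      proof
        assume "y = a" then show ?thesis using insert AB
          by (intro exI[of _ "A + c y"] exI[of _ B]) (simp add: algebra_simps)
      next
        assume "y = b" then show ?thesis using insert AB
          by (intro exI[of _ A] exI[of _ "B + c y"]) (simp add: algebra_simps)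
      qed
    qed
  qed
  then show ?thesis using x by blast
qed

lemma ideal_gen_subst:
  assumes "x \<in> ideal_gen S"
  shows "subst_hom h x \<in> ideal_gen (subst_hom h ` S)"
proof -
  obtain G c where x: "x = (\<Sum>s\<in>G. c s * s)" "finite G" "G \<subseteq> S"
    using assms unfolding ideal_gen_def by blast
  have "subst_hom h x = (\<Sum>s\<in>G. subst_hom h (c s) * subst_hom h s)"
    by (simp add: x subst_sum subst_mult)
  also have "\<dots> \<in> ideal_gen (subst_hom h ` S)"
    by (rule ideal_gen_sum, rule ideal_gen_mult, rule ideal_gen_base) (use x in auto)
  finally show ?thesis .
qed

lemma ideal_gen_power_diff:
  assumes "a - b \<in> ideal_gen S"
  shows "a ^ k - b ^ k \<in> ideal_gen S"
proof (induct k)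
  case 0 then show ?case by simp
next
  case (Suc k)
  have "a ^ Suc k - b ^ Suc k = a * (a ^ k - b ^ k) + (a - b) * b ^ k"
    by (simp add: algebra_simps)
  then show ?case using Suc assms by (metis ideal_gen_add ideal_gen_mult ideal_gen_mult2)
qed

section \<open>Monomial maps\<close>

definition nuhat :: "('v \<Rightarrow> ('w \<Rightarrow>\<^sub>0 nat)) \<Rightarrow> ('v \<Rightarrow>\<^sub>0 nat) \<Rightarrow> ('w \<Rightarrow>\<^sub>0 nat)" where
  "nuhat \<nu> m = (\<Sum>v\<in>Poly_Mapping.keys m. \<Sum>i<Poly_Mapping.lookup m v. \<nu> v)"

lemma mon_power: "mon a ^ k = mon (\<Sum>i<k. a)"
  by (induct k) (simp_all add: mon_add)

lemma Ev_mon: "Ev (\<lambda>v. mon (\<nu> v)) m = mon (nuhat \<nu> m)"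
  by (simp only: Ev_def nuhat_def mon_power mon_sum)

lemma lookup_nuhat: "Poly_Mapping.lookup (nuhat \<nu> m) w =
   (\<Sum>v\<in>Poly_Mapping.keys m. Poly_Mapping.lookup m v * Poly_Mapping.lookup (\<nu> v) w)"
  by (simp add: nuhat_def lookup_sum)

lemma nuhat_add: "nuhat \<nu> (a + b) = nuhat \<nu> a + nuhat \<nu> b"
proof -
  have "mon (nuhat \<nu> (a + b)) = mon (nuhat \<nu> a + nuhat \<nu> b)"
    unfolding Ev_mon[symmetric] mon_add Ev_add ..
  then show ?thesis unfolding mon_inj .
qed

lemma nuhat_single: "nuhat \<nu> (Poly_Mapping.single v k) = (\<Sum>i<k. \<nu> v)"
  by (cases "k = 0") (simp_all add: nuhat_def)

lemma subst_mon_map: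
  assumes "\<And>v. g v = mon (\<nu> v)"
  shows "subst_hom g (mon m) = mon (nuhat \<nu> m)"
proof -
  have "g = (\<lambda>v. mon (\<nu> v))" using assms by auto
  then show ?thesis by (simp add: subst_mon Ev_mon)
qed

lemma toric:
  assumes g: "\<And>v. g v = mon (\<nu> v)"
    and R: "\<And>m. mon m - mon (R (nuhat \<nu> m)) \<in> ideal_gen S"
    and p: "subst_hom g p = 0"
  shows "p \<in> ideal_gen S"
proof -
  let ?K = "Poly_Mapping.keys p" and ?c = "Poly_Mapping.lookup p"
  have gg: "g = (\<lambda>v. mon (\<nu> v))" using g by auto
  have sp: "subst_hom g p = (\<Sum>m\<in>?K. Poly_Mapping.single (nuhat \<nu> m) (?c m))"
    by (simp add: subst_repr gg Ev_mon Const_mon)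
  define F where "F t = (\<Sum>m\<in>{m\<in>?K. nuhat \<nu> m = t}. ?c m)" for t
  have F0: "F t = 0" for t
  proof -
    have "Poly_Mapping.lookup (subst_hom g p) t = (\<Sum>m\<in>?K. if nuhat \<nu> m = t then ?c m else 0)"
      by (simp add: sp lookup_sum lookup_single when_def)
    also have "\<dots> = F t" by (simp add: F_def sum.inter_filter)
    finally show ?thesis using p by simp
  qed
  have prep: "p = (\<Sum>m\<in>?K. Const (?c m) * mon m)"
    unfolding Const_mon by (rule poly_repr)
  define q where "q = (\<Sum>m\<in>?K. Const (?c m) * mon (R (nuhat \<nu> m)))"
  from prep have "p - q = (\<Sum>m\<in>?K. Const (?c m) * mon m) - q"
    by (rule arg_cong[where f="\<lambda>x. x - q"])
  also have "\<dots> = (\<Sum>m\<in>?K. Const (?c m) * (mon m - mon (R (nuhat \<nu> m))))"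
    unfolding q_def by (simp only: sum_subtractf right_diff_distrib)
  also have "\<dots> \<in> ideal_gen S"
    by (rule ideal_gen_sum, rule ideal_gen_mult, rule R)
  finally have pq: "p - q \<in> ideal_gen S" .
  have "q = (\<Sum>t\<in>nuhat \<nu> ` ?K. \<Sum>m\<in>{m\<in>?K. nuhat \<nu> m = t}. Const (?c m) * mon (R (nuhat \<nu> m)))"
    unfolding q_def by (rule sum.image_gen) simp
  also have "\<dots> = (\<Sum>t\<in>nuhat \<nu> ` ?K. \<Sum>m\<in>{m\<in>?K. nuhat \<nu> m = t}. Const (?c m) * mon (R t))"
    by (rule sum.cong, simp, rule sum.cong) auto
  also have "\<dots> = (\<Sum>t\<in>nuhat \<nu> ` ?K. Const (F t) * mon (R t))"
    unfolding F_def Const_sum sum_distrib_right ..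
  also have "\<dots> = 0" by (simp add: F0)
  finally have "q = 0" .
  then show ?thesis using pq by (metis diff_zero)
qed


lemma binom_split:
  fixes s d :: "'a::comm_ring_1" and m :: nat
  defines "T \<equiv> \<lambda>k. of_nat (m choose k) * d ^ k * s ^ (m - k)"
  shows "(d + s)^m = (\<Sum>i\<le>m div 2. T (2*i) + T (Suc (2*i)))"
    and "(- d + s)^m = (\<Sum>i\<le>m div 2. T (2*i) - T (Suc (2*i)))"
proof -
  have ext: "(\<Sum>k\<le>m. f k) = (\<Sum>k\<le>Suc (2 * (m div 2)). f k)" if "\<And>k. k > m \<Longrightarrow> f k = 0" for f :: "nat \<Rightarrow> 'a"
    by (rule sum.mono_neutral_left) (auto simp: that)
  have "(d + s)^m = (\<Sum>k\<le>m. T k)" unfolding T_def binomial_ring ..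
  also have "\<dots> = (\<Sum>k\<le>Suc (2 * (m div 2)). T k)" by (rule ext) (simp add: T_def binomial_eq_0)
  also have "\<dots> = (\<Sum>i\<le>m div 2. T (2*i) + T (Suc (2*i)))" by (rule sum.in_pairs_0)
  finally show "(d + s)^m = (\<Sum>i\<le>m div 2. T (2*i) + T (Suc (2*i)))" .
  have "(- d + s)^m = (\<Sum>k\<le>m. (-1)^k * T k)" unfolding T_def binomial_ring
    by (rule sum.cong) (simp_all add: power_minus[of d] mult_ac)
  also have "\<dots> = (\<Sum>k\<le>Suc (2 * (m div 2)). (-1)^k * T k)" by (rule ext) (simp add: T_def binomial_eq_0)
  also have "\<dots> = (\<Sum>i\<le>m div 2. (-1)^(2*i) * T (2*i) + (-1)^(Suc (2*i)) * T (Suc (2*i)))"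
    by (rule sum.in_pairs_0)
  also have "\<dots> = (\<Sum>i\<le>m div 2. T (2*i) - T (Suc (2*i)))"
    by (simp add: power_mult)
  finally show "(- d + s)^m = (\<Sum>i\<le>m div 2. T (2*i) - T (Suc (2*i)))" .
qed

lemma binom_even:
  fixes s d :: "'a::comm_ring_1"
  shows "(s + d)^m + (s - d)^m = 2 * (\<Sum>i=0..m div 2. of_nat (m choose (2*i)) * s ^ (m - 2*i) * (d^2)^i)"
proof -
  have "(s + d)^m + (s - d)^m = (d + s)^m + (- d + s)^m" by (simp add: algebra_simps)
  also have "\<dots> = (\<Sum>i\<le>m div 2. 2 * (of_nat (m choose (2*i)) * d ^ (2*i) * s ^ (m - 2*i)))"
    unfolding binom_split sum.distrib[symmetric] by (rule sum.cong) simp_all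
  also have "\<dots> = 2 * (\<Sum>i=0..m div 2. of_nat (m choose (2*i)) * s ^ (m - 2*i) * (d^2)^i)"
    unfolding sum_distrib_left atLeast0AtMost
  proof (rule sum.cong)
    fix i assume "i \<in> {..m div 2}"
    have "d ^ (2*i) = (d^2)^i" by (simp only: power_mult)
    then show "2 * (of_nat (m choose (2*i)) * d ^ (2*i) * s ^ (m - 2*i)) = 2 * (of_nat (m choose (2*i)) * s ^ (m - 2*i) * (d^2)^i)"
      by (simp only: mult_ac)
  qed simp
  finally show ?thesis .
qed

lemma binom_odd:
  fixes s d :: "'a::comm_ring_1"
  shows "(s + d)^(n+1) - (s - d)^(n+1) = 2 * d * (\<Sum>i=0..(n+1) div 2. of_nat ((n+1) choose (2*i+1)) * s ^ (n - 2*i) * (d^2)^i)"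
proof -
  have "(s + d)^(n+1) - (s - d)^(n+1) = (d + s)^(n+1) - (- d + s)^(n+1)" by (simp add: algebra_simps)
  also have "\<dots> = (\<Sum>i\<le>(n+1) div 2. 2 * (of_nat ((n+1) choose (Suc (2*i))) * d ^ (Suc (2*i)) * s ^ ((n+1) - Suc (2*i))))"
    unfolding binom_split sum_subtractf[symmetric] by (rule sum.cong) simp_all
  also have "\<dots> = 2 * d * (\<Sum>i=0..(n+1) div 2. of_nat ((n+1) choose (2*i+1)) * s ^ (n - 2*i) * (d^2)^i)"
    unfolding sum_distrib_left atLeast0AtMost
  proof (rule sum.cong)
    fix i assume "i \<in> {..(n+1) div 2}"
    have 1: "d ^ (Suc (2*i)) = d * (d^2)^i" by (simp only: power_mult power_Suc)
    have 2: "(n+1) - Suc (2*i) = n - 2*i" by simp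
    show "2 * (of_nat ((n+1) choose (Suc (2*i))) * d ^ (Suc (2*i)) * s ^ ((n+1) - Suc (2*i))) = 2 * d * (of_nat ((n+1) choose (2*i+1)) * s ^ (n - 2*i) * (d^2)^i)"
      unfolding 1 2 by (simp only: mult_ac Suc_eq_plus1)
  qed simp
  finally show ?thesis .
qed


lemma G_ids:
  fixes su sv sw du dv dw h :: "'a::comm_ring_1"
  assumes h: "2*h = 1" and n: "n \<ge> 1"
  defines "G1 \<equiv> h*(su+du)*(h*(sw+dw)) - (h*(sv+dv))^(n+1)"
    and "G2 \<equiv> h*(su-du)*(h*(sw-dw)) - (h*(sv-dv))^(n+1)"
    and "SE \<equiv> (\<Sum>i=0..(n+1) div 2. of_nat ((n+1) choose (2*i)) * sv^(n+1-2*i) * (dv^2)^i)"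
    and "SO \<equiv> (\<Sum>i=0..(n+1) div 2. of_nat ((n+1) choose (2*i+1)) * sv^(n-2*i) * (dv^2)^i)"
  shows "G1 + G2 = -(h^n) * (SE - 2^(n-1)*(su*sw + du*dw))"
    and "G1 - G2 = -(h^n) * (SO * dv - 2^(n-1)*(su*dw + sw*du))"
proof -
  obtain k where k: "n = Suc k" using n by (cases n) auto
  have hn: "h^n * 2^(n-1) = h"
  proof -
    have "h^n * 2^(n-1) = h * (2*h)^k" by (simp add: k power_mult_distrib mult_ac)
    then show ?thesis using h by simp
  qed
  have h2: "h^(n+1) * 2 = h^n" proof - have "h^(n+1) * 2 = (2*h) * h^n" by (simp add: mult_ac) then show ?thesis using h by simp qed
  have e: "(h*(sv+dv))^(n+1) + (h*(sv-dv))^(n+1) = h^n * SE"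
  proof -
    have "(h*(sv+dv))^(n+1) + (h*(sv-dv))^(n+1) = h^(n+1) * ((sv+dv)^(n+1) + (sv-dv)^(n+1))"
      unfolding power_mult_distrib by (simp only: distrib_left)
    also have "\<dots> = (h^(n+1) * 2) * SE" unfolding binom_even SE_def by (simp add: mult_ac)
    finally show ?thesis unfolding h2 .
  qed
  have o: "(h*(sv+dv))^(n+1) - (h*(sv-dv))^(n+1) = h^n * (SO * dv)"
  proof -
    have "(h*(sv+dv))^(n+1) - (h*(sv-dv))^(n+1) = h^(n+1) * ((sv+dv)^(n+1) - (sv-dv)^(n+1))"
      unfolding power_mult_distrib by (simp only: right_diff_distrib)
    also have "\<dots> = (h^(n+1) * 2) * (SO * dv)" unfolding binom_odd SO_def by (simp add: mult_ac)
    finally show ?thesis unfolding h2 .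
  qed
  have q1: "h*(su+du)*(h*(sw+dw)) + h*(su-du)*(h*(sw-dw)) = (2*h)*h*(su*sw + du*dw)"
    by (simp add: algebra_simps)
  have q2: "h*(su+du)*(h*(sw+dw)) - h*(su-du)*(h*(sw-dw)) = (2*h)*h*(su*dw + sw*du)"
    by (simp add: algebra_simps)
  have "G1 + G2 = (h*(su+du)*(h*(sw+dw)) + h*(su-du)*(h*(sw-dw))) - ((h*(sv+dv))^(n+1) + (h*(sv-dv))^(n+1))"
    unfolding G1_def G2_def by (simp add: algebra_simps)
  also have "\<dots> = h*(su*sw + du*dw) - h^n * SE" unfolding q1 e h by simp
  also have "\<dots> = -(h^n) * SE + (h^n * 2^(n-1))*(su*sw + du*dw)" unfolding hn by simp
  also have "\<dots> = -(h^n) * (SE - 2^(n-1)*(su*sw + du*dw))"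
    by (simp add: algebra_simps)
  finally show "G1 + G2 = -(h^n) * (SE - 2^(n-1)*(su*sw + du*dw))" .
  have "G1 - G2 = (h*(su+du)*(h*(sw+dw)) - h*(su-du)*(h*(sw-dw))) - ((h*(sv+dv))^(n+1) - (h*(sv-dv))^(n+1))"
    unfolding G1_def G2_def by (simp add: algebra_simps)
  also have "\<dots> = h*(su*dw + sw*du) - h^n * (SO * dv)" unfolding q2 o h by simp
  also have "\<dots> = -(h^n) * (SO * dv) + (h^n * 2^(n-1))*(su*dw + sw*du)" unfolding hn by simp
  also have "\<dots> = -(h^n) * (SO * dv - 2^(n-1)*(su*dw + sw*du))"
    by (simp add: algebra_simps)
  finally show "G1 - G2 = -(h^n) * (SO * dv - 2^(n-1)*(su*dw + sw*du))" .
qed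

lemma G_ids2:
  fixes su sv sw du dv dw h :: "'a::comm_ring_1"
  assumes h: "2*h = 1" and n: "n \<ge> 1"
  defines "G1 \<equiv> h*(su+du)*(h*(sw+dw)) - (h*(sv+dv))^(n+1)"
    and "G2 \<equiv> h*(su-du)*(h*(sw-dw)) - (h*(sv-dv))^(n+1)"
  shows "dv * (G1 - G2) = -(h^n) * ((\<Sum>i=0..(n+1) div 2. of_nat ((n+1) choose (2*i+1)) * sv^(n-2*i) * (dv^2)^(i+1))
            - 2^(n-1)*(su*(dv*dw) + sw*(du*dv)))"
    and "dw * (G1 - G2) = -(h^n) * ((\<Sum>i=0..(n+1) div 2. of_nat ((n+1) choose (2*i+1)) * sv^(n-2*i) * (dv^2)^i * (dv*dw))
            - 2^(n-1)*(su*dw^2 + sw*(du*dw)))"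
    and "du * (G1 - G2) = -(h^n) * ((\<Sum>i=0..(n+1) div 2. of_nat ((n+1) choose (2*i+1)) * sv^(n-2*i) * (dv^2)^i * (du*dv))
            - 2^(n-1)*(sw*du^2 + su*(du*dw)))"
proof -
  define SO where "SO = (\<Sum>i=0..(n+1) div 2. of_nat ((n+1) choose (2*i+1)) * sv^(n-2*i) * (dv^2)^i)"
  have GG: "G1 - G2 = -(h^n) * (SO * dv - 2^(n-1)*(su*dw + sw*du))"
    unfolding G1_def G2_def SO_def by (rule G_ids(2)[OF h n])
  have s1: "(\<Sum>i=0..(n+1) div 2. of_nat ((n+1) choose (2*i+1)) * sv^(n-2*i) * (dv^2)^(i+1)) = SO * dv * dv"
    unfolding SO_def sum_distrib_right by (rule sum.cong) (simp_all add: power2_eq_square mult_ac)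
  have s2: "(\<Sum>i=0..(n+1) div 2. of_nat ((n+1) choose (2*i+1)) * sv^(n-2*i) * (dv^2)^i * (dv*dw)) = SO * (dv * dw)"
    unfolding SO_def sum_distrib_right ..
  have s3: "(\<Sum>i=0..(n+1) div 2. of_nat ((n+1) choose (2*i+1)) * sv^(n-2*i) * (dv^2)^i * (du*dv)) = SO * (du * dv)"
    unfolding SO_def sum_distrib_right ..
  show "dv * (G1 - G2) = -(h^n) * ((\<Sum>i=0..(n+1) div 2. of_nat ((n+1) choose (2*i+1)) * sv^(n-2*i) * (dv^2)^(i+1))
            - 2^(n-1)*(su*(dv*dw) + sw*(du*dv)))"
    unfolding s1 GG by (simp add: algebra_simps)
  show "dw * (G1 - G2) = -(h^n) * ((\<Sum>i=0..(n+1) div 2. of_nat ((n+1) choose (2*i+1)) * sv^(n-2*i) * (dv^2)^i * (dv*dw))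
            - 2^(n-1)*(su*dw^2 + sw*(du*dw)))"
    unfolding s2 GG by (simp add: algebra_simps power2_eq_square)
  show "du * (G1 - G2) = -(h^n) * ((\<Sum>i=0..(n+1) div 2. of_nat ((n+1) choose (2*i+1)) * sv^(n-2*i) * (dv^2)^i * (du*dv))
            - 2^(n-1)*(sw*du^2 + su*(du*dw)))"
    unfolding s3 GG by (simp add: algebra_simps power2_eq_square)
qed


abbreviation lk where "lk \<equiv> Poly_Mapping.lookup"

datatype zvar = SU | SV | SW | DU | DV | DW
datatype yvar = U1 | V1 | W1 | U2 | V2 | W2

lemma UNIV_xvar: "(UNIV::xvar set) = {X1,X2,X3,X4,X5,X6,X7,X8,X9}"
  by (rule set_eqI, case_tac x) auto
lemma UNIV_zvar: "(UNIV::zvar set) = {SU,SV,SW,DU,DV,DW}"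
  by (rule set_eqI, case_tac x) auto
lemma UNIV_yvar: "(UNIV::yvar set) = {U1,V1,W1,U2,V2,W2}"
  by (rule set_eqI, case_tac x) auto
lemma UNIV_tvar: "(UNIV::tvar set) = {A1,A2,B1,B2}"
  by (rule set_eqI, case_tac x) auto

lemma lookup_nuhat_UNIV:
  assumes "finite (UNIV :: 'v set)"
  shows "lk (nuhat \<nu> (m :: 'v \<Rightarrow>\<^sub>0 nat)) w = (\<Sum>v\<in>UNIV. lk m v * lk (\<nu> v) w)"
  unfolding lookup_nuhat
  by (rule sum.mono_neutral_left) (use assms in \<open>auto simp: in_keys_iff\<close>)

lemma minus_add_cancel_pm:
  assumes "\<And>v. lk A v \<le> lk m v"
  shows "(m - A) + A = (m :: 'v \<Rightarrow>\<^sub>0 nat)"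
  by (rule poly_mapping_eqI) (simp add: lookup_add lookup_minus assms)

section \<open>The monomial map chi\<close>

definition nu2 :: "xvar \<Rightarrow> (zvar \<Rightarrow>\<^sub>0 nat)" where
  "nu2 v = (case v of
     X1 \<Rightarrow> Poly_Mapping.single SU 1 | X2 \<Rightarrow> Poly_Mapping.single SV 1 | X3 \<Rightarrow> Poly_Mapping.single SW 1
   | X4 \<Rightarrow> Poly_Mapping.single DU 2 | X5 \<Rightarrow> Poly_Mapping.single DV 2 | X6 \<Rightarrow> Poly_Mapping.single DW 2
   | X7 \<Rightarrow> Poly_Mapping.single DU 1 + Poly_Mapping.single DV 1
   | X8 \<Rightarrow> Poly_Mapping.single DU 1 + Poly_Mapping.single DW 1
   | X9 \<Rightarrow> Poly_Mapping.single DV 1 + Poly_Mapping.single DW 1)"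

definition chi :: "xvar \<Rightarrow> zvar mpoly" where "chi v = mon (nu2 v)"

lemma nuhat2: "lk (nuhat nu2 m) w = (case w of
    SU \<Rightarrow> lk m X1 | SV \<Rightarrow> lk m X2 | SW \<Rightarrow> lk m X3
  | DU \<Rightarrow> 2 * lk m X4 + lk m X7 + lk m X8
  | DV \<Rightarrow> 2 * lk m X5 + lk m X7 + lk m X9
  | DW \<Rightarrow> 2 * lk m X6 + lk m X8 + lk m X9)"
  by (cases w) (simp_all add: lookup_nuhat_UNIV UNIV_xvar nu2_def lookup_add lookup_single)

lemma nuhat2_eqI:
  assumes "lk a X1 = lk b X1" "lk a X2 = lk b X2" "lk a X3 = lk b X3"
    "2 * lk a X4 + lk a X7 + lk a X8 = 2 * lk b X4 + lk b X7 + lk b X8"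
    "2 * lk a X5 + lk a X7 + lk a X9 = 2 * lk b X5 + lk b X7 + lk b X9"
    "2 * lk a X6 + lk a X8 + lk a X9 = 2 * lk b X6 + lk b X8 + lk b X9"
  shows "nuhat nu2 a = nuhat nu2 b"
  by (rule poly_mapping_eqI, case_tac k) (simp_all add: nuhat2 assms)

definition R2 :: "(zvar \<Rightarrow>\<^sub>0 nat) \<Rightarrow> (xvar \<Rightarrow>\<^sub>0 nat)" where
  "R2 t = Poly_Mapping.single X1 (lk t SU) + Poly_Mapping.single X2 (lk t SV) + Poly_Mapping.single X3 (lk t SW)
    + Poly_Mapping.single X4 (lk t DU div 2) + Poly_Mapping.single X5 (lk t DV div 2) + Poly_Mapping.single X6 (lk t DW div 2)
    + Poly_Mapping.single X7 (if odd (lk t DU) \<and> odd (lk t DV) then 1 else 0)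
    + Poly_Mapping.single X8 (if odd (lk t DU) \<and> odd (lk t DW) then 1 else 0)
    + Poly_Mapping.single X9 (if odd (lk t DV) \<and> odd (lk t DW) then 1 else 0)"

lemma R2_lookup: "lk (R2 t) v = (case v of
    X1 \<Rightarrow> lk t SU | X2 \<Rightarrow> lk t SV | X3 \<Rightarrow> lk t SW
  | X4 \<Rightarrow> lk t DU div 2 | X5 \<Rightarrow> lk t DV div 2 | X6 \<Rightarrow> lk t DW div 2
  | X7 \<Rightarrow> (if odd (lk t DU) \<and> odd (lk t DV) then 1 else 0)
  | X8 \<Rightarrow> (if odd (lk t DU) \<and> odd (lk t DW) then 1 else 0)
  | X9 \<Rightarrow> (if odd (lk t DV) \<and> odd (lk t DW) then 1 else 0))"
  by (cases v) (simp_all add: R2_def lookup_add lookup_single)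

lemma par_aux:
  fixes a b c :: nat
  assumes "even (a + b + c)"
  shows "2 * (a div 2) + (if odd a \<and> odd b then 1 else 0) + (if odd a \<and> odd c then 1 else 0) = a"
  using assms by presburger

lemma nuhat_R2:
  assumes "even (lk t DU + lk t DV + lk t DW)"
  shows "nuhat nu2 (R2 t) = t"
proof (rule poly_mapping_eqI)
  fix w show "lk (nuhat nu2 (R2 t)) w = lk t w"
  proof (cases w)
    case DU then show ?thesis using par_aux[of "lk t DU" "lk t DV" "lk t DW"] assms by (simp add: nuhat2 R2_lookup)
  next
    case DV then show ?thesis using par_aux[of "lk t DV" "lk t DU" "lk t DW"] assms by (simp add: nuhat2 R2_lookup ac_simps)
  next
    case DW then show ?thesis using par_aux[of "lk t DW" "lk t DU" "lk t DV"] assms by (simp add: nuhat2 R2_lookup ac_simps)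
  qed (simp_all add: nuhat2 R2_lookup)
qed

definition meas :: "(xvar \<Rightarrow>\<^sub>0 nat) \<Rightarrow> nat" where
  "meas m = lk m X7 + lk m X8 + lk m X9"

lemma R2_base:
  assumes "meas m \<le> 1"
  shows "R2 (nuhat nu2 m) = m"
proof (rule poly_mapping_eqI)
  fix v show "lk (R2 (nuhat nu2 m)) v = lk m v"
    using assms unfolding meas_def by (cases v; simp add: nuhat2 R2_lookup; presburger?)
qed

definition "F3 = Var X5 * Var X8 - Var X7 * Var X9"
definition "F4 = Var X5 * Var X6 - Var X9 ^ 2"
definition "F5 = Var X4 * Var X5 - Var X7 ^ 2"
definition "F8 = Var X7 * Var X8 - Var X4 * Var X9"
definition "F9 = Var X6 * Var X7 - Var X8 * Var X9"
definition "F10 = Var X4 * Var X6 - Var X8 ^ 2"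

lemma F_in_gens: "F3 \<in> gens n" "F4 \<in> gens n" "F5 \<in> gens n" "F8 \<in> gens n" "F9 \<in> gens n" "F10 \<in> gens n"
  by (simp_all add: gens_def Let_def F3_def F4_def F5_def F8_def F9_def F10_def)

lemma F_in_ideal: "F3 \<in> ideal_gen (gens n)" "F4 \<in> ideal_gen (gens n)" "F5 \<in> ideal_gen (gens n)"
  "F8 \<in> ideal_gen (gens n)" "F9 \<in> ideal_gen (gens n)" "F10 \<in> ideal_gen (gens n)"
  using F_in_gens ideal_gen_base by blast+

lemma vmove:
  assumes le: "\<And>v. lk A v \<le> lk m v" and AB: "mon A - mon B \<in> ideal_gen S"
    and nu: "nuhat nu2 A = nuhat nu2 B"
    and IH: "mon (m - A + B) - mon (R2 (nuhat nu2 (m - A + B))) \<in> ideal_gen S"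
  shows "mon m - mon (R2 (nuhat nu2 m)) \<in> ideal_gen S"
proof -
  define c where "c = m - A"
  have m: "c + A = m" unfolding c_def by (rule minus_add_cancel_pm[OF le])
  have nh: "nuhat nu2 m = nuhat nu2 (c + B)"
    unfolding m[symmetric] nuhat_add nu ..
  have "mon m - mon (c + B) = mon c * (mon A - mon B)"
    unfolding m[symmetric] mon_add by (simp add: right_diff_distrib)
  also have "\<dots> \<in> ideal_gen S" by (rule ideal_gen_mult[OF AB])
  finally have 1: "mon m - mon (c + B) \<in> ideal_gen S" .
  have "mon m - mon (R2 (nuhat nu2 m)) = (mon m - mon (c + B)) + (mon (c + B) - mon (R2 (nuhat nu2 (c + B))))"
    unfolding nh by simp
  also have "\<dots> \<in> ideal_gen S" using 1 IH unfolding c_def by (rule ideal_gen_add)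
  finally show ?thesis .
qed

lemma mon_s: "mon (Poly_Mapping.single v 1) = Var v" "mon (Poly_Mapping.single v 2) = Var v ^ 2"
  "mon (Poly_Mapping.single v 1 + Poly_Mapping.single w 1) = Var v * Var w"
  by (simp_all add: mon_single mon_add)

lemma veronese: "mon m - mon (R2 (nuhat nu2 m)) \<in> ideal_gen (gens n)"
proof (induct "meas m" arbitrary: m rule: less_induct)
  case less
  let ?I = "ideal_gen (gens n)"
  let ?s = "Poly_Mapping.single :: xvar \<Rightarrow> nat \<Rightarrow> _"
  show ?case
  proof (cases "meas m \<le> 1")
    case True then show ?thesis by (simp add: R2_base)
  next
    case False
    then consider "lk m X7 \<ge> 2" | "lk m X8 \<ge> 2" | "lk m X9 \<ge> 2"
      | "lk m X7 \<ge> 1" "lk m X8 \<ge> 1" | "lk m X7 \<ge> 1" "lk m X9 \<ge> 1" | "lk m X8 \<ge> 1" "lk m X9 \<ge> 1"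
      unfolding meas_def by linarith
    then show ?thesis
    proof cases
      case 1
      show ?thesis
      proof (rule vmove[where A="?s X7 2" and B="?s X4 1 + ?s X5 1"])
        show "lk (?s X7 2) v \<le> lk m v" for v using 1 by (simp add: lookup_single when_def)
        show "mon (?s X7 2) - mon (?s X4 1 + ?s X5 1) \<in> ?I"
          using ideal_gen_uminus[OF F_in_ideal(3)] by (simp add: mon_add mon_single F5_def)
        show "nuhat nu2 (?s X7 2) = nuhat nu2 (?s X4 1 + ?s X5 1)"
          by (rule nuhat2_eqI) (simp_all add: lookup_add lookup_single)
        show "mon (m - ?s X7 2 + (?s X4 1 + ?s X5 1)) - mon (R2 (nuhat nu2 (m - ?s X7 2 + (?s X4 1 + ?s X5 1)))) \<in> ?I"
          by (rule less) (use 1 in \<open>simp add: meas_def lookup_add lookup_minus lookup_single\<close>)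
      qed
    next
      case 2
      show ?thesis
      proof (rule vmove[where A="?s X8 2" and B="?s X4 1 + ?s X6 1"])
        show "lk (?s X8 2) v \<le> lk m v" for v using 2 by (simp add: lookup_single when_def)
        show "mon (?s X8 2) - mon (?s X4 1 + ?s X6 1) \<in> ?I"
          using ideal_gen_uminus[OF F_in_ideal(6)] by (simp add: mon_add mon_single F10_def)
        show "nuhat nu2 (?s X8 2) = nuhat nu2 (?s X4 1 + ?s X6 1)"
          by (rule nuhat2_eqI) (simp_all add: lookup_add lookup_single)
        show "mon (m - ?s X8 2 + (?s X4 1 + ?s X6 1)) - mon (R2 (nuhat nu2 (m - ?s X8 2 + (?s X4 1 + ?s X6 1)))) \<in> ?I"
          by (rule less) (use 2 in \<open>simp add: meas_def lookup_add lookup_minus lookup_single\<close>)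
      qed
    next
      case 3
      show ?thesis
      proof (rule vmove[where A="?s X9 2" and B="?s X5 1 + ?s X6 1"])
        show "lk (?s X9 2) v \<le> lk m v" for v using 3 by (simp add: lookup_single when_def)
        show "mon (?s X9 2) - mon (?s X5 1 + ?s X6 1) \<in> ?I"
          using ideal_gen_uminus[OF F_in_ideal(2)] by (simp add: mon_add mon_single F4_def)
        show "nuhat nu2 (?s X9 2) = nuhat nu2 (?s X5 1 + ?s X6 1)"
          by (rule nuhat2_eqI) (simp_all add: lookup_add lookup_single)
        show "mon (m - ?s X9 2 + (?s X5 1 + ?s X6 1)) - mon (R2 (nuhat nu2 (m - ?s X9 2 + (?s X5 1 + ?s X6 1)))) \<in> ?I"
          by (rule less) (use 3 in \<open>simp add: meas_def lookup_add lookup_minus lookup_single\<close>)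
      qed
    next
      case 4
      show ?thesis
      proof (rule vmove[where A="?s X7 1 + ?s X8 1" and B="?s X4 1 + ?s X9 1"])
        show "lk (?s X7 1 + ?s X8 1) v \<le> lk m v" for v using 4 by (simp add: lookup_add lookup_single when_def)
        show "mon (?s X7 1 + ?s X8 1) - mon (?s X4 1 + ?s X9 1) \<in> ?I"
          using F_in_ideal(4) by (simp add: mon_add mon_single F8_def)
        show "nuhat nu2 (?s X7 1 + ?s X8 1) = nuhat nu2 (?s X4 1 + ?s X9 1)"
          by (rule nuhat2_eqI) (simp_all add: lookup_add lookup_single)
        show "mon (m - (?s X7 1 + ?s X8 1) + (?s X4 1 + ?s X9 1)) - mon (R2 (nuhat nu2 (m - (?s X7 1 + ?s X8 1) + (?s X4 1 + ?s X9 1)))) \<in> ?I"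
          by (rule less) (use 4 in \<open>simp add: meas_def lookup_add lookup_minus lookup_single\<close>)
      qed
    next
      case 5
      show ?thesis
      proof (rule vmove[where A="?s X7 1 + ?s X9 1" and B="?s X5 1 + ?s X8 1"])
        show "lk (?s X7 1 + ?s X9 1) v \<le> lk m v" for v using 5 by (simp add: lookup_add lookup_single when_def)
        show "mon (?s X7 1 + ?s X9 1) - mon (?s X5 1 + ?s X8 1) \<in> ?I"
          using ideal_gen_uminus[OF F_in_ideal(1)] by (simp add: mon_add mon_single F3_def)
        show "nuhat nu2 (?s X7 1 + ?s X9 1) = nuhat nu2 (?s X5 1 + ?s X8 1)"
          by (rule nuhat2_eqI) (simp_all add: lookup_add lookup_single)
        show "mon (m - (?s X7 1 + ?s X9 1) + (?s X5 1 + ?s X8 1)) - mon (R2 (nuhat nu2 (m - (?s X7 1 + ?s X9 1) + (?s X5 1 + ?s X8 1)))) \<in> ?I"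
          by (rule less) (use 5 in \<open>simp add: meas_def lookup_add lookup_minus lookup_single\<close>)
      qed
    next
      case 6
      show ?thesis
      proof (rule vmove[where A="?s X8 1 + ?s X9 1" and B="?s X6 1 + ?s X7 1"])
        show "lk (?s X8 1 + ?s X9 1) v \<le> lk m v" for v using 6 by (simp add: lookup_add lookup_single when_def)
        show "mon (?s X8 1 + ?s X9 1) - mon (?s X6 1 + ?s X7 1) \<in> ?I"
          using ideal_gen_uminus[OF F_in_ideal(5)] by (simp add: mon_add mon_single F9_def)
        show "nuhat nu2 (?s X8 1 + ?s X9 1) = nuhat nu2 (?s X6 1 + ?s X7 1)"
          by (rule nuhat2_eqI) (simp_all add: lookup_add lookup_single)
        show "mon (m - (?s X8 1 + ?s X9 1) + (?s X6 1 + ?s X7 1)) - mon (R2 (nuhat nu2 (m - (?s X8 1 + ?s X9 1) + (?s X6 1 + ?s X7 1)))) \<in> ?I"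
          by (rule less) (use 6 in \<open>simp add: meas_def lookup_add lookup_minus lookup_single\<close>)
      qed
    qed
  qed
qed

lemma ker_chi: "subst_hom chi p = 0 \<Longrightarrow> p \<in> ideal_gen (gens n)"
  by (rule toric[where \<nu>=nu2 and R=R2]) (simp_all add: chi_def veronese)

section \<open>The monomial map mu\<close>

definition nu1 :: "nat \<Rightarrow> yvar \<Rightarrow> (tvar \<Rightarrow>\<^sub>0 nat)" where
  "nu1 N v = (case v of
     U1 \<Rightarrow> Poly_Mapping.single A1 N | V1 \<Rightarrow> Poly_Mapping.single A1 1 + Poly_Mapping.single A2 1
   | W1 \<Rightarrow> Poly_Mapping.single A2 N
   | U2 \<Rightarrow> Poly_Mapping.single B1 N | V2 \<Rightarrow> Poly_Mapping.single B1 1 + Poly_Mapping.single B2 1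
   | W2 \<Rightarrow> Poly_Mapping.single B2 N)"

definition mu :: "nat \<Rightarrow> yvar \<Rightarrow> tvar mpoly" where "mu n v = mon (nu1 (n+1) v)"

lemma nuhat1: "lk (nuhat (nu1 N) m) w = (case w of
    A1 \<Rightarrow> N * lk m U1 + lk m V1 | A2 \<Rightarrow> lk m V1 + N * lk m W1
  | B1 \<Rightarrow> N * lk m U2 + lk m V2 | B2 \<Rightarrow> lk m V2 + N * lk m W2)"
  by (cases w) (simp_all add: lookup_nuhat_UNIV UNIV_yvar nu1_def lookup_add lookup_single mult_ac)

definition R1 :: "nat \<Rightarrow> (tvar \<Rightarrow>\<^sub>0 nat) \<Rightarrow> (yvar \<Rightarrow>\<^sub>0 nat)" where
  "R1 N t = Poly_Mapping.single U1 ((lk t A1 - min (lk t A1) (lk t A2)) div N)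
     + Poly_Mapping.single V1 (min (lk t A1) (lk t A2))
     + Poly_Mapping.single W1 ((lk t A2 - min (lk t A1) (lk t A2)) div N)
     + Poly_Mapping.single U2 ((lk t B1 - min (lk t B1) (lk t B2)) div N)
     + Poly_Mapping.single V2 (min (lk t B1) (lk t B2))
     + Poly_Mapping.single W2 ((lk t B2 - min (lk t B1) (lk t B2)) div N)"

lemma arith1:
  fixes N i j k :: nat
  assumes N: "N > 0"
  shows "min (N*i + j) (j + N*k) = j + N * min i k"
    and "(N*i + j - min (N*i + j) (j + N*k)) div N = i - min i k"
    and "(j + N*k - min (N*i + j) (j + N*k)) div N = k - min i k"
proof -
  have A: "min (N*i + j) (j + N*k) = j + N * min i k"
  proof (cases "i \<le> k")
    case True then have "N*i \<le> N*k" by simp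
    then show ?thesis using True by (simp add: min_def)
  next
    case False then have "N*k \<le> N*i" by simp
    then show ?thesis using False by (simp add: min_def)
  qed
  show "min (N*i + j) (j + N*k) = j + N * min i k" by (rule A)
  have "N*i + j - (j + N * min i k) = N * (i - min i k)" by (simp add: diff_mult_distrib2)
  then show "(N*i + j - min (N*i + j) (j + N*k)) div N = i - min i k" using N by (simp add: A)
  have "j + N*k - (j + N * min i k) = N * (k - min i k)" by (simp add: diff_mult_distrib2)
  then show "(j + N*k - min (N*i + j) (j + N*k)) div N = k - min i k" using N by (simp add: A)
qed

lemma mdiv: "(N::nat) > 0 \<Longrightarrow> (N * x - N * y) div N = x - y"
  by (simp add: diff_mult_distrib2[symmetric])

definition "g1 N = Var U1 * Var W1 - Var V1 ^ N"
definition "g2 N = Var U2 * Var W2 - Var V2 ^ N"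

lemma toric1_move:
  assumes N: "N > 0"
  shows "mon m - mon (R1 N (nuhat (nu1 N) m)) \<in> ideal_gen {g1 N, g2 N}"
proof -
  let ?s = "Poly_Mapping.single :: yvar \<Rightarrow> nat \<Rightarrow> _"
  let ?I = "ideal_gen {g1 N, g2 N}"
  define k1 where "k1 = min (lk m U1) (lk m W1)"
  define k2 where "k2 = min (lk m U2) (lk m W2)"
  define A where "A = ?s U1 k1 + ?s W1 k1 + ?s U2 k2 + ?s W2 k2"
  define B where "B = ?s V1 (N*k1) + ?s V2 (N*k2)"
  define c where "c = m - A"
  have cA: "c + A = m" unfolding c_def
    by (rule minus_add_cancel_pm) (simp add: A_def lookup_add lookup_single when_def k1_def k2_def)
  have R: "R1 N (nuhat (nu1 N) m) = c + B"
  proof (rule poly_mapping_eqI)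
    fix v
    note a = arith1[OF N, of "lk m U1" "lk m V1" "lk m W1"] arith1[OF N, of "lk m U2" "lk m V2" "lk m W2"]
    show "lk (R1 N (nuhat (nu1 N) m)) v = lk (c + B) v"
      by (cases v) (simp_all add: R1_def nuhat1 lookup_add lookup_single lookup_minus c_def A_def B_def
          k1_def k2_def a mdiv[OF N])
  qed
  have mA: "mon A = (Var U1 * Var W1) ^ k1 * (Var U2 * Var W2) ^ k2"
    by (simp add: A_def mon_add mon_single power_mult_distrib mult_ac)
  have mB: "mon B = (Var V1 ^ N) ^ k1 * (Var V2 ^ N) ^ k2"
    by (simp add: B_def mon_add mon_single power_mult)
  have d1: "(Var U1 * Var W1) ^ k1 - (Var V1 ^ N) ^ k1 \<in> ?I"
    by (rule ideal_gen_power_diff) (simp add: ideal_gen_base g1_def[symmetric])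
  have d2: "(Var U2 * Var W2) ^ k2 - (Var V2 ^ N) ^ k2 \<in> ?I"
    by (rule ideal_gen_power_diff) (simp add: ideal_gen_base g2_def[symmetric])
  have "mon A - mon B = ((Var U1 * Var W1) ^ k1 - (Var V1 ^ N) ^ k1) * (Var U2 * Var W2) ^ k2
      + (Var V1 ^ N) ^ k1 * ((Var U2 * Var W2) ^ k2 - (Var V2 ^ N) ^ k2)"
    unfolding mA mB by (simp add: algebra_simps)
  also have "\<dots> \<in> ?I" using d1 d2 by (intro ideal_gen_add ideal_gen_mult ideal_gen_mult2)
  finally have AB: "mon A - mon B \<in> ?I" .
  have mm: "mon m = mon c * mon A" unfolding cA[symmetric] mon_add ..
  have "mon m - mon (R1 N (nuhat (nu1 N) m)) = mon c * (mon A - mon B)"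
    unfolding R mm mon_add by (simp add: right_diff_distrib)
  also have "\<dots> \<in> ?I" by (rule ideal_gen_mult[OF AB])
  finally show ?thesis .
qed

lemma ker_mu: "subst_hom (mu n) p = 0 \<Longrightarrow> p \<in> ideal_gen {g1 (n+1), g2 (n+1)}"
  by (rule toric[where \<nu>="nu1 (n+1)" and R="R1 (n+1)"]) (simp_all add: mu_def toric1_move)

section \<open>Linear changes of variables\<close>

definition hf :: "'v mpoly" where "hf = Const (1/2)"

lemma hf2: "2 * hf = (1 :: 'v mpoly)"
proof -
  have "(2 :: 'v mpoly) * hf = Const 2 * Const (1/2)" by (simp add: hf_def Const_numeral)
  also have "\<dots> = Const (2 * (1/2))" by (rule Const_mult[symmetric])
  finally show ?thesis by simp
qed

lemma half_id: "hf * (a + b) + hf * (a - b) = (a :: 'v mpoly)" "hf * (a + b) - hf * (a - b) = (b :: 'v mpoly)"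
proof -
  have "hf * (a + b) + hf * (a - b) = (2 * hf) * a" by (simp add: algebra_simps)
  then show "hf * (a + b) + hf * (a - b) = a" by (simp add: hf2)
  have "hf * (a + b) - hf * (a - b) = (2 * hf) * b" by (simp add: algebra_simps)
  then show "hf * (a + b) - hf * (a - b) = b" by (simp add: hf2)
qed

lemma hf_twice[simp]: "hf * (2 * a) = (a :: 'v mpoly)"
proof -
  have "hf * (2 * a) = (2 * hf) * a" by (simp add: algebra_simps)
  then show ?thesis by (simp add: hf2)
qed

lemma half_id2: "hf * ((a + b) + (a - b)) = (a :: 'v mpoly)" "hf * ((a + b) - (a - b)) = (b :: 'v mpoly)"
  using half_id[of a b] by (simp_all add: algebra_simps)

lemma subst_hf[simp]: "subst_hom g hf = hf"
  by (simp add: hf_def)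

definition L :: "zvar \<Rightarrow> yvar mpoly" where
  "L v = (case v of SU \<Rightarrow> Var U1 + Var U2 | SV \<Rightarrow> Var V1 + Var V2 | SW \<Rightarrow> Var W1 + Var W2
    | DU \<Rightarrow> Var U1 - Var U2 | DV \<Rightarrow> Var V1 - Var V2 | DW \<Rightarrow> Var W1 - Var W2)"

definition Li :: "yvar \<Rightarrow> zvar mpoly" where
  "Li v = (case v of U1 \<Rightarrow> hf * (Var SU + Var DU) | U2 \<Rightarrow> hf * (Var SU - Var DU)
    | V1 \<Rightarrow> hf * (Var SV + Var DV) | V2 \<Rightarrow> hf * (Var SV - Var DV)
    | W1 \<Rightarrow> hf * (Var SW + Var DW) | W2 \<Rightarrow> hf * (Var SW - Var DW))"

definition sig :: "zvar \<Rightarrow> zvar mpoly" where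
  "sig v = (case v of SU \<Rightarrow> Var SU | SV \<Rightarrow> Var SV | SW \<Rightarrow> Var SW
    | DU \<Rightarrow> - Var DU | DV \<Rightarrow> - Var DV | DW \<Rightarrow> - Var DW)"

lemma LiL: "subst_hom Li (subst_hom L p) = p"
proof -
  have "(\<lambda>v. subst_hom Li (L v)) = Var"
    by (rule ext, case_tac v) (simp_all add: L_def Li_def subst_add subst_diff subst_mult
        distrib_left[symmetric] right_diff_distrib[symmetric] half_id2)
  then show ?thesis by (simp add: subst_comp subst_Var_id)
qed

lemma LLi: "subst_hom L (subst_hom Li q) = q"
proof -
  have "(\<lambda>v. subst_hom L (Li v)) = Var"
    by (rule ext, case_tac v) (simp_all add: L_def Li_def subst_add subst_diff subst_mult half_id2)
  then show ?thesis by (simp add: subst_comp subst_Var_id)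
qed

lemma sig_sig: "subst_hom sig (subst_hom sig p) = p"
proof -
  have "(\<lambda>v. subst_hom sig (sig v)) = Var"
    by (rule ext, case_tac v) (simp_all add: sig_def subst_uminus)
  then show ?thesis by (simp add: subst_comp subst_Var_id)
qed

lemma chi_vars: "chi X1 = Var SU" "chi X2 = Var SV" "chi X3 = Var SW"
  "chi X4 = Var DU ^ 2" "chi X5 = Var DV ^ 2" "chi X6 = Var DW ^ 2"
  "chi X7 = Var DU * Var DV" "chi X8 = Var DU * Var DW" "chi X9 = Var DV * Var DW"
  by (simp_all add: chi_def nu2_def mon_add mon_single)

lemma sig_chi: "subst_hom sig (subst_hom chi p) = subst_hom chi p"
proof -
  have "(\<lambda>v. subst_hom sig (chi v)) = chi"
    by (rule ext, case_tac v) (simp_all add: chi_vars sig_def subst_mult subst_power)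
  then show ?thesis by (simp add: subst_comp)
qed

lemma mu_vars: "mu n U1 = Var A1 ^ (n+1)" "mu n V1 = Var A1 * Var A2" "mu n W1 = Var A2 ^ (n+1)"
  "mu n U2 = Var B1 ^ (n+1)" "mu n V2 = Var B1 * Var B2" "mu n W2 = Var B2 ^ (n+1)"
  by (simp_all add: mu_def nu1_def mon_add mon_single del: Suc_eq_plus1 add_Suc_right One_nat_def)

lemma phi_eq: "phi n p = subst_hom (mu n) (subst_hom L (subst_hom chi p))"
proof -
  have "(\<lambda>v. subst_hom (mu n) (subst_hom L (chi v))) = phi_img n"
    by (rule ext, case_tac v) (simp_all add: chi_vars L_def phi_img_def Let_def mu_vars subst_add subst_diff subst_mult subst_power)
  then show ?thesis by (simp add: phi_def subst_comp)
qed

definition "GG1 n = subst_hom Li (g1 (n+1))"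
definition "GG2 n = subst_hom Li (g2 (n+1))"

lemma GG1_eq: "GG1 n = hf*(Var SU + Var DU)*(hf*(Var SW + Var DW)) - (hf*(Var SV + Var DV))^(n+1)"
  by (simp add: GG1_def g1_def Li_def subst_mult subst_diff subst_power)
lemma GG2_eq: "GG2 n = hf*(Var SU - Var DU)*(hf*(Var SW - Var DW)) - (hf*(Var SV - Var DV))^(n+1)"
  by (simp add: GG2_def g2_def Li_def subst_mult subst_diff subst_power)

lemma sig_GG: "subst_hom sig (GG1 n) = GG2 n" "subst_hom sig (GG2 n) = GG1 n"
  by (simp_all add: GG1_eq GG2_eq sig_def subst_mult subst_diff subst_power subst_add subst_uminus)

definition "F1 n = (\<Sum>i=0..(n+1) div 2. of_nat ((n+1) choose (2*i)) * Var X2 ^ (n + 1 - 2*i) * Var X5 ^ i)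
            - (2::xvar mpoly) ^ (n-1) * (Var X1 * Var X3 + Var X8)"
definition "F2 n = (\<Sum>i=0..(n+1) div 2. of_nat ((n+1) choose (2*i+1)) * Var X2 ^ (n - 2*i) * Var X5 ^ (i+1))
            - (2::xvar mpoly) ^ (n-1) * (Var X1 * Var X9 + Var X3 * Var X7)"
definition "F6 n = (\<Sum>i=0..(n+1) div 2. of_nat ((n+1) choose (2*i+1)) * Var X2 ^ (n - 2*i) * Var X5 ^ i * Var X9)
            - (2::xvar mpoly) ^ (n-1) * (Var X1 * Var X6 + Var X3 * Var X8)"
definition "F7 n = (\<Sum>i=0..(n+1) div 2. of_nat ((n+1) choose (2*i+1)) * Var X2 ^ (n - 2*i) * Var X5 ^ i * Var X7)
            - (2::xvar mpoly) ^ (n-1) * (Var X3 * Var X4 + Var X1 * Var X8)"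

lemma gens_eq: "gens n = {F1 n, F2 n, F3, F4, F5, F6 n, F7 n, F8, F9, F10}"
  by (simp add: gens_def Let_def F1_def F2_def F3_def F4_def F5_def F6_def F7_def F8_def F9_def F10_def)

lemma F_in_ideal2: "F1 n \<in> ideal_gen (gens n)" "F2 n \<in> ideal_gen (gens n)"
  "F6 n \<in> ideal_gen (gens n)" "F7 n \<in> ideal_gen (gens n)"
  by (simp_all add: gens_eq ideal_gen_base)

lemmas chi_simps = subst_diff subst_sum subst_mult subst_power subst_add chi_vars

lemma chiF1: "subst_hom chi (F1 n) = (\<Sum>i=0..(n+1) div 2. of_nat ((n+1) choose (2*i)) * Var SV ^ (n+1-2*i) * (Var DV^2)^i)
   - 2^(n-1) * (Var SU * Var SW + Var DU * Var DW)"
  by (simp add: F1_def chi_simps)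
lemma chiF2: "subst_hom chi (F2 n) = (\<Sum>i=0..(n+1) div 2. of_nat ((n+1) choose (2*i+1)) * Var SV^(n-2*i) * (Var DV^2)^(i+1))
            - 2^(n-1)*(Var SU*(Var DV*Var DW) + Var SW*(Var DU*Var DV))"
  by (simp add: F2_def chi_simps)
lemma chiF6: "subst_hom chi (F6 n) = (\<Sum>i=0..(n+1) div 2. of_nat ((n+1) choose (2*i+1)) * Var SV^(n-2*i) * (Var DV^2)^i * (Var DV*Var DW))
            - 2^(n-1)*(Var SU*Var DW^2 + Var SW*(Var DU*Var DW))"
  by (simp add: F6_def chi_simps)
lemma chiF7: "subst_hom chi (F7 n) = (\<Sum>i=0..(n+1) div 2. of_nat ((n+1) choose (2*i+1)) * Var SV^(n-2*i) * (Var DV^2)^i * (Var DU*Var DV))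
            - 2^(n-1)*(Var SW*Var DU^2 + Var SU*(Var DU*Var DW))"
  by (simp add: F7_def chi_simps)

context
  fixes n :: nat
  assumes n: "n \<ge> 1"
begin

lemma KF1: "GG1 n + GG2 n = -(hf^n) * subst_hom chi (F1 n)"
  unfolding chiF1 GG1_eq GG2_eq by (rule G_ids(1)[OF hf2 n])
lemma KF2: "Var DV * (GG1 n - GG2 n) = -(hf^n) * subst_hom chi (F2 n)"
  unfolding chiF2 GG1_eq GG2_eq by (rule G_ids2(1)[OF hf2 n])
lemma KF6: "Var DW * (GG1 n - GG2 n) = -(hf^n) * subst_hom chi (F6 n)"
  unfolding chiF6 GG1_eq GG2_eq by (rule G_ids2(2)[OF hf2 n])
lemma KF7: "Var DU * (GG1 n - GG2 n) = -(hf^n) * subst_hom chi (F7 n)"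
  unfolding chiF7 GG1_eq GG2_eq by (rule G_ids2(3)[OF hf2 n])

end

definition "CI n = subst_hom chi ` ideal_gen (gens n)"

lemma CI_add: "a \<in> CI n \<Longrightarrow> b \<in> CI n \<Longrightarrow> a + b \<in> CI n"
  unfolding CI_def by (auto simp: image_iff subst_add[symmetric] intro!: ideal_gen_add)

lemma CI_Const: "a \<in> CI n \<Longrightarrow> Const c * a \<in> CI n"
proof -
  assume "a \<in> CI n"
  then obtain p where p: "p \<in> ideal_gen (gens n)" "a = subst_hom chi p" unfolding CI_def by auto
  have "Const c * a = subst_hom chi (Const c * p)" by (simp add: p subst_mult)
  then show ?thesis unfolding CI_def using ideal_gen_mult[OF p(1)] by blast
qed

lemma CI_0: "0 \<in> CI n"
  unfolding CI_def by (rule image_eqI[of _ _ 0]) simp_all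

lemma CI_sum: "(\<And>a. a \<in> A \<Longrightarrow> f a \<in> CI n) \<Longrightarrow> sum f A \<in> CI n"
  by (induct A rule: infinite_finite_induct) (auto intro: CI_add CI_0)

lemma CI_chi: "r \<in> ideal_gen (gens n) \<Longrightarrow> subst_hom chi q * (- (hf ^ k) * subst_hom chi r) \<in> CI n"
proof -
  assume r: "r \<in> ideal_gen (gens n)"
  have eq: "subst_hom chi q * (- (hf ^ k) * subst_hom chi r) = subst_hom chi (q * (- (hf ^ k)) * r)"
    by (simp add: subst_mult subst_uminus subst_power)
  have "q * (- (hf ^ k)) * r \<in> ideal_gen (gens n)" by (rule ideal_gen_mult[OF r])
  then show ?thesis unfolding CI_def eq by (rule imageI)
qed

lemma finite_zvar: "finite (UNIV :: zvar set)" by (simp add: UNIV_zvar)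

lemma Ev_zvar: "Ev g m = g SU ^ lk m SU * g SV ^ lk m SV * g SW ^ lk m SW * g DU ^ lk m DU * g DV ^ lk m DV * g DW ^ lk m DW"
proof -
  have "Ev g m = (\<Prod>v\<in>UNIV. g v ^ lk m v)" by (rule Ev_superset[OF finite_zvar]) simp
  then show ?thesis by (simp add: UNIV_zvar mult_ac)
qed

lemma sig_mon: "subst_hom sig (mon m) = (-1) ^ (lk m DU + lk m DV + lk m DW) * mon m"
  unfolding subst_mon
  by (simp only: Ev_zvar mon_Ev) (simp add: sig_def power_minus[of "Var DU"] power_minus[of "Var DV"] power_minus[of "Var DW"] power_add mult_ac)

lemma mon_chi: "even (lk m DU + lk m DV + lk m DW) \<Longrightarrow> mon m = subst_hom chi (mon (R2 m))"
  using subst_mon_map[of chi nu2 "R2 m"] by (simp add: chi_def nuhat_R2)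

lemma split_DX:
  assumes "odd (lk m D)"
  shows "mon m = mon (m - Poly_Mapping.single D (Suc 0)) * Var D"
    and "lk (m - Poly_Mapping.single D (Suc 0)) w = (if w = D then lk m w - 1 else lk m w)"
proof -
  have "m - Poly_Mapping.single D (Suc 0) + Poly_Mapping.single D (Suc 0) = m"
    by (rule minus_add_cancel_pm) (use assms in \<open>auto simp: lookup_single when_def dest: odd_pos\<close>)
  then show "mon m = mon (m - Poly_Mapping.single D (Suc 0)) * Var D"
    by (metis mon_add mon_single power_one_right One_nat_def)
  show "lk (m - Poly_Mapping.single D (Suc 0)) w = (if w = D then lk m w - 1 else lk m w)"
    by (simp add: lookup_minus lookup_single when_def)
qed

context
  fixes n :: nat
  assumes n: "n \<ge> 1"
begin

lemma key_mon: "mon m * GG1 n + subst_hom sig (mon m) * GG2 n \<in> CI n"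
proof (cases "even (lk m DU + lk m DV + lk m DW)")
  case True
  have "mon m * GG1 n + subst_hom sig (mon m) * GG2 n = mon m * (GG1 n + GG2 n)"
    using True by (simp add: sig_mon distrib_left)
  also have "\<dots> = subst_hom chi (mon (R2 m)) * (-(hf^n) * subst_hom chi (F1 n))"
    using True by (simp add: KF1[OF n] mon_chi[symmetric])
  also have "\<dots> \<in> CI n" by (rule CI_chi[OF F_in_ideal2(1)])
  finally show ?thesis .
next
  case False
  have "mon m * GG1 n + subst_hom sig (mon m) * GG2 n = mon m * (GG1 n - GG2 n)"
    using False by (simp add: sig_mon right_diff_distrib)
  also have "\<dots> \<in> CI n"
  proof -
    consider "odd (lk m DU)" | "even (lk m DU)" "odd (lk m DV)" | "even (lk m DU)" "even (lk m DV)" "odd (lk m DW)"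
      using False by auto
    then show ?thesis
    proof cases
      case 1
      let ?m = "m - Poly_Mapping.single DU (Suc 0)"
      have l: "lk ?m DU = (if DU = DU then lk m DU - 1 else lk m DU)" "lk ?m DV = (if DV = DU then lk m DV - 1 else lk m DV)"
        "lk ?m DW = (if DW = DU then lk m DW - 1 else lk m DW)" by (rule split_DX(2)[OF 1])+
      have ev: "even (lk ?m DU + lk ?m DV + lk ?m DW)" unfolding l using False 1 by (simp; presburger?)
      have "mon m * (GG1 n - GG2 n) = subst_hom chi (mon (R2 ?m)) * (Var DU * (GG1 n - GG2 n))"
        by (simp add: split_DX(1)[OF 1] mon_chi[OF ev, symmetric] mult_ac)
      also have "\<dots> = subst_hom chi (mon (R2 ?m)) * (-(hf^n) * subst_hom chi (F7 n))" by (simp add: KF7[OF n])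
      also have "\<dots> \<in> CI n" by (rule CI_chi[OF F_in_ideal2(4)])
      finally show ?thesis .
    next
      case 2
      let ?m = "m - Poly_Mapping.single DV (Suc 0)"
      have l: "lk ?m DU = (if DU = DV then lk m DU - 1 else lk m DU)" "lk ?m DV = (if DV = DV then lk m DV - 1 else lk m DV)"
        "lk ?m DW = (if DW = DV then lk m DW - 1 else lk m DW)" by (rule split_DX(2)[OF 2(2)])+
      have ev: "even (lk ?m DU + lk ?m DV + lk ?m DW)" unfolding l using False 2 by (simp; presburger?)
      have "mon m * (GG1 n - GG2 n) = subst_hom chi (mon (R2 ?m)) * (Var DV * (GG1 n - GG2 n))"
        by (simp add: split_DX(1)[OF 2(2)] mon_chi[OF ev, symmetric] mult_ac)
      also have "\<dots> = subst_hom chi (mon (R2 ?m)) * (-(hf^n) * subst_hom chi (F2 n))" by (simp add: KF2[OF n])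
      also have "\<dots> \<in> CI n" by (rule CI_chi[OF F_in_ideal2(2)])
      finally show ?thesis .
    next
      case 3
      let ?m = "m - Poly_Mapping.single DW (Suc 0)"
      have l: "lk ?m DU = (if DU = DW then lk m DU - 1 else lk m DU)" "lk ?m DV = (if DV = DW then lk m DV - 1 else lk m DV)"
        "lk ?m DW = (if DW = DW then lk m DW - 1 else lk m DW)" by (rule split_DX(2)[OF 3(3)])+
      have ev: "even (lk ?m DU + lk ?m DV + lk ?m DW)" unfolding l using False 3 by (simp; presburger?)
      have "mon m * (GG1 n - GG2 n) = subst_hom chi (mon (R2 ?m)) * (Var DW * (GG1 n - GG2 n))"
        by (simp add: split_DX(1)[OF 3(3)] mon_chi[OF ev, symmetric] mult_ac)
      also have "\<dots> = subst_hom chi (mon (R2 ?m)) * (-(hf^n) * subst_hom chi (F6 n))" by (simp add: KF6[OF n])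
      also have "\<dots> \<in> CI n" by (rule CI_chi[OF F_in_ideal2(3)])
      finally show ?thesis .
    qed
  qed
  finally show ?thesis .
qed

lemma key: "A * GG1 n + subst_hom sig A * GG2 n \<in> CI n"
proof -
  define K where "K = Poly_Mapping.keys A"
  define c where "c = Poly_Mapping.lookup A"
  have A_eq: "A = (\<Sum>m\<in>K. Const (c m) * mon m)"
    unfolding K_def c_def Const_mon by (rule poly_repr)
  have "A * GG1 n + subst_hom sig A * GG2 n
      = (\<Sum>m\<in>K. Const (c m) * mon m) * GG1 n + subst_hom sig (\<Sum>m\<in>K. Const (c m) * mon m) * GG2 n"
    using A_eq by simp
  also have "\<dots> = (\<Sum>m\<in>K. Const (c m) * (mon m * GG1 n + subst_hom sig (mon m) * GG2 n))"
  proof -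
    have 1: "(\<Sum>m\<in>K. Const (c m) * mon m) * GG1 n = (\<Sum>m\<in>K. Const (c m) * mon m * GG1 n)"
      by (rule sum_distrib_right)
    have 2: "subst_hom sig (\<Sum>m\<in>K. Const (c m) * mon m) * GG2 n = (\<Sum>m\<in>K. Const (c m) * subst_hom sig (mon m) * GG2 n)"
      by (simp add: subst_sum subst_mult sum_distrib_right)
    show ?thesis unfolding 1 2 sum.distrib[symmetric] by (rule sum.cong) (simp_all add: algebra_simps)
  qed
  also have "\<dots> \<in> CI n" by (rule CI_sum, rule CI_Const, rule key_mon)
  finally show ?thesis .
qed

lemma ker_sub: "phi n p = 0 \<Longrightarrow> p \<in> ideal_gen (gens n)"
proof -
  assume ph: "phi n p = 0"
  define q where "q = subst_hom chi p"
  have "subst_hom (mu n) (subst_hom L q) = 0" using ph by (simp add: phi_eq q_def)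
  then have "subst_hom L q \<in> ideal_gen {g1 (n+1), g2 (n+1)}" by (rule ker_mu)
  then obtain A B where AB: "subst_hom L q = A * g1 (n+1) + B * g2 (n+1)" using ideal_gen_pair by blast
  define A' where "A' = subst_hom Li A"
  define B' where "B' = subst_hom Li B"
  have q: "q = A' * GG1 n + B' * GG2 n"
    using arg_cong[OF AB, of "subst_hom Li"] by (simp add: LiL A'_def B'_def GG1_def GG2_def subst_add subst_mult)
  have sq: "subst_hom sig q = q" by (simp add: q_def sig_chi)
  have sigq: "subst_hom sig q = subst_hom sig A' * GG2 n + subst_hom sig B' * GG1 n"
    by (simp add: q subst_add subst_mult sig_GG)
  define X where "X = A' + subst_hom sig B'"
  have sX: "subst_hom sig X = subst_hom sig A' + B'" by (simp add: X_def subst_add sig_sig)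
  have "2 * q = q + subst_hom sig q" using sq by simp
  also have "\<dots> = X * GG1 n + subst_hom sig X * GG2 n"
    unfolding sX unfolding X_def using sigq q by (simp add: algebra_simps)
  also have "\<dots> \<in> CI n" by (rule key)
  finally obtain r where r: "r \<in> ideal_gen (gens n)" "2 * q = subst_hom chi r" unfolding CI_def by auto
  have "subst_hom chi (2 * p - r) = 0" using r(2) by (simp add: subst_diff subst_mult q_def)
  then have "2 * p - r \<in> ideal_gen (gens n)" by (rule ker_chi)
  then have "2 * p - r + r \<in> ideal_gen (gens n)" using r(1) by (rule ideal_gen_add)
  then have "2 * p \<in> ideal_gen (gens n)" by simp
  then have "hf * (2 * p) \<in> ideal_gen (gens n)" by (rule ideal_gen_mult)
  then show ?thesis by (simp only: hf_twice)
qed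

end


lemma inv_hf: assumes "X = -(hf^n) * Y" shows "Y = -(2^n) * (X :: 'v mpoly)"
proof -
  have "-(2^n) * X = ((2::'v mpoly)^n * hf^n) * Y" by (simp add: assms)
  also have "\<dots> = Y" by (simp add: power_mult_distrib[symmetric] hf2)
  finally show ?thesis by simp
qed

lemma mu_g: "subst_hom (mu n) (g1 (n+1)) = 0" "subst_hom (mu n) (g2 (n+1)) = 0"
  unfolding g1_def g2_def by (simp_all add: mu_vars subst_mult subst_diff subst_power power_mult_distrib)

lemma phiGG: "subst_hom (mu n) (subst_hom L (GG1 n)) = 0" "subst_hom (mu n) (subst_hom L (GG2 n)) = 0"
  unfolding GG1_def GG2_def LLi by (rule mu_g)+

lemma chi_ver: "subst_hom chi F3 = 0" "subst_hom chi F4 = 0" "subst_hom chi F5 = 0"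
  "subst_hom chi F8 = 0" "subst_hom chi F9 = 0" "subst_hom chi F10 = 0"
  by (simp_all add: F3_def F4_def F5_def F8_def F9_def F10_def subst_diff subst_mult subst_power chi_vars
      power2_eq_square mult_ac)

lemma gens_ker:
  assumes n: "n \<ge> 1" and f: "f \<in> gens n"
  shows "phi n f = 0"
proof -
  have c1: "subst_hom chi (F1 n) = -(2^n) * (GG1 n + GG2 n)" by (rule inv_hf[OF KF1[OF n]])
  have c2: "subst_hom chi (F2 n) = -(2^n) * (Var DV * (GG1 n - GG2 n))" by (rule inv_hf[OF KF2[OF n]])
  have c6: "subst_hom chi (F6 n) = -(2^n) * (Var DW * (GG1 n - GG2 n))" by (rule inv_hf[OF KF6[OF n]])
  have c7: "subst_hom chi (F7 n) = -(2^n) * (Var DU * (GG1 n - GG2 n))" by (rule inv_hf[OF KF7[OF n]])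
  from f show ?thesis unfolding gens_eq
    by (elim insertE emptyE)
       (simp_all only: phi_eq c1 c2 c6 c7 chi_ver subst_mult subst_add subst_diff subst_uminus subst_power
         phiGG subst_0 mult_zero_right diff_self add_0_right)
qed

theorem mainTheorem2:
  fixes n :: nat
  assumes "n \<ge> 1"
  shows "{p. phi n p = 0} = ideal_gen (gens n)"
proof
  show "{p. phi n p = 0} \<subseteq> ideal_gen (gens n)" using ker_sub[OF assms] by blast
  show "ideal_gen (gens n) \<subseteq> {p. phi n p = 0}"
  proof
    fix x assume "x \<in> ideal_gen (gens n)"
    then obtain G c where x: "x = (\<Sum>s\<in>G. c s * s)" "finite G" "G \<subseteq> gens n"
      unfolding ideal_gen_def by blast
    have "phi n x = (\<Sum>s\<in>G. phi n (c s) * phi n s)"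
      by (simp add: x phi_def subst_sum subst_mult)
    also have "\<dots> = 0" using x gens_ker[OF assms] by (auto intro!: sum.neutral)
    finally show "x \<in> {p. phi n p = 0}" by simp
  qed
qed


end
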